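(* Let $f:\{0,1\}^n\to\{0,1\}$ be total, $\epsilon\in[0,1/2)$, and $q$ a real polynomial with $q(x)\in[1-2\epsilon,1]$ whenever $f(x)=1$ and $q(x)\in[-1,-1+2\epsilon]$ whenever $f(x)=0$. Define the $2^n\times2^n$ matrix $B_q$ by $(B_q)_{xy}=\tfrac12(q(x)-q(y))$ if $|x\oplus y|=1$ and $(B_q)_{xy}=0$ otherwise. Then $\lambda(f)\le\frac{1}{1-2\epsilon}\|B_q\|$.
   Context: $|x\oplus y|$ is the Hamming distance. The sensitivity graph $G_f$ has vertex set $\{0,1\}^n$ and an edge between $x,y$ iff they differ in exactly one coordinate and $f(x)\ne f(y)$; $A_f$ is its adjacency matrix and $\lambda(f)=\|A_f\|$ (spectral norm). *)

theory Defs
  imports Main Complex_Main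
begin

text \<open>The Boolean cube {0,1}^n: a point x is identified with the set of coordinates
  i < n where x_i = 1.\<close>
definition cube :: "nat \<Rightarrow> nat set set" where
  "cube n = {x. x \<subseteq> {..<n}}"

definition hamming :: "nat set \<Rightarrow> nat set \<Rightarrow> nat" where
  "hamming x y = card ((x - y) \<union> (y - x))"

text \<open>Evaluation at a cube point of a real polynomial in variables x_0..x_(n-1),
  given by a finitely supported coefficient function on exponent vectors.\<close>
definition poly_eval :: "nat \<Rightarrow> ((nat \<Rightarrow> nat) \<Rightarrow> real) \<Rightarrow> nat set \<Rightarrow> real" where
  "poly_eval n c x =
     (\<Sum>\<alpha>\<in>{\<alpha>. c \<alpha> \<noteq> 0}. c \<alpha> * (\<Prod>i<n. (if i \<in> x then 1 else 0) ^ \<alpha> i))"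

definition sens_adj :: "(nat set \<Rightarrow> bool) \<Rightarrow> nat set \<Rightarrow> nat set \<Rightarrow> real" where
  "sens_adj f x y = (if hamming x y = 1 \<and> f x \<noteq> f y then 1 else 0)"

definition B_mat :: "(nat set \<Rightarrow> real) \<Rightarrow> nat set \<Rightarrow> nat set \<Rightarrow> real" where
  "B_mat q x y = (if hamming x y = 1 then (q x - q y) / 2 else 0)"

definition spec_norm :: "'a set \<Rightarrow> ('a \<Rightarrow> 'a \<Rightarrow> real) \<Rightarrow> real" where
  "spec_norm V M = Sup {sqrt (\<Sum>x\<in>V. (\<Sum>y\<in>V. M x y * v y)\<^sup>2) | v.
                         (\<Sum>x\<in>V. (v x)\<^sup>2) \<le> 1}"

definition lambda_sens :: "nat \<Rightarrow> (nat set \<Rightarrow> bool) \<Rightarrow> real" where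
  "lambda_sens n f = spec_norm (cube n) (sens_adj f)"

end

theory Submission
  imports Defs
begin

definition mv :: "'a set \<Rightarrow> ('a\<Rightarrow>'a\<Rightarrow>real) \<Rightarrow> ('a\<Rightarrow>real) \<Rightarrow> 'a \<Rightarrow> real" where
  "mv V M v x = (\<Sum>y\<in>V. M x y * v y)"
definition nr :: "'a set \<Rightarrow> ('a\<Rightarrow>real) \<Rightarrow> real" where
  "nr V v = (\<Sum>x\<in>V. (v x)^2)"

lemma spec_norm_alt: "spec_norm V M = Sup {sqrt (nr V (mv V M v)) | v. nr V v \<le> 1}"
  unfolding spec_norm_def nr_def mv_def by simp

lemma bdd_sn:
  assumes "finite V"
  shows "bdd_above {sqrt (nr V (mv V M v)) | v. nr V v \<le> 1}"
proof (rule bdd_aboveI[where M="sqrt (\<Sum>x\<in>V. (\<Sum>y\<in>V. \<bar>M x y\<bar>)^2)"])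
  fix r assume "r \<in> {sqrt (nr V (mv V M v)) | v. nr V v \<le> 1}"
  then obtain v where r: "r = sqrt (nr V (mv V M v))" and v: "nr V v \<le> 1" by auto
  have vb: "\<bar>v y\<bar> \<le> 1" if "y \<in> V" for y
  proof -
    have "(v y)^2 \<le> nr V v" unfolding nr_def
      using member_le_sum[of y V "\<lambda>x. (v x)^2"] assms that by auto
    then have "(v y)^2 \<le> 1" using v by simp
    then show ?thesis by (simp add: abs_square_le_1)
  qed
  have "(mv V M v x)^2 \<le> (\<Sum>y\<in>V. \<bar>M x y\<bar>)^2" for x
  proof -
    have "\<bar>mv V M v x\<bar> \<le> (\<Sum>y\<in>V. \<bar>M x y * v y\<bar>)" unfolding mv_def by (rule sum_abs)
    also have "\<dots> \<le> (\<Sum>y\<in>V. \<bar>M x y\<bar>)"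
      by (rule sum_mono) (simp add: abs_mult mult_left_le vb)
    finally have "\<bar>mv V M v x\<bar>^2 \<le> (\<Sum>y\<in>V. \<bar>M x y\<bar>)^2"
      by (intro power_mono) auto
    then show ?thesis by simp
  qed
  then have "nr V (mv V M v) \<le> (\<Sum>x\<in>V. (\<Sum>y\<in>V. \<bar>M x y\<bar>)^2)"
    unfolding nr_def by (rule sum_mono)
  then show "r \<le> sqrt (\<Sum>x\<in>V. (\<Sum>y\<in>V. \<bar>M x y\<bar>)^2)" using r by simp
qed

lemma sn_nonneg:
  assumes "finite V"
  shows "0 \<le> spec_norm V M"
proof -
  have "sqrt (nr V (mv V M (\<lambda>_. 0))) \<in> {sqrt (nr V (mv V M v)) | v. nr V v \<le> 1}"
    by (auto simp: nr_def)
  moreover have "sqrt (nr V (mv V M (\<lambda>_. 0))) = 0" by (simp add: nr_def mv_def)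
  ultimately have "0 \<in> {sqrt (nr V (mv V M v)) | v. nr V v \<le> 1}" by simp
  from cSup_upper[OF this bdd_sn[OF assms]] show ?thesis unfolding spec_norm_alt .
qed

lemma sn_scale:
  assumes "finite V"
  shows "nr V (mv V M w) \<le> (spec_norm V M)^2 * nr V w"
proof (cases "nr V w = 0")
  case True
  then have "\<forall>y\<in>V. w y = 0" unfolding nr_def using assms
    by (simp add: sum_nonneg_eq_0_iff)
  then have "mv V M w x = 0" for x unfolding mv_def by simp
  then have "nr V (mv V M w) = 0" by (simp add: nr_def)
  then show ?thesis using True by simp
next
  case False
  have nn: "nr V w \<ge> 0" unfolding nr_def by (simp add: sum_nonneg)
  define s where "s = sqrt (nr V w)"
  have s: "s > 0" "s^2 = nr V w" using nn False by (auto simp: s_def)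
  define w' where "w' = (\<lambda>y. w y / s)"
  have "nr V w' = nr V w / s^2" unfolding nr_def w'_def
    by (simp add: power_divide sum_divide_distrib)
  then have "nr V w' \<le> 1" using s by simp
  then have "sqrt (nr V (mv V M w')) \<le> spec_norm V M" unfolding spec_norm_alt
    by (intro cSup_upper[OF _ bdd_sn[OF assms]]) auto
  moreover have "mv V M w' x = mv V M w x / s" for x unfolding mv_def w'_def
    by (simp add: sum_divide_distrib)
  then have "nr V (mv V M w') = nr V (mv V M w) / s^2" unfolding nr_def
    by (simp add: power_divide sum_divide_distrib)
  ultimately have "sqrt (nr V (mv V M w) / s^2) \<le> spec_norm V M" by simp
  then have le: "nr V (mv V M w) / s^2 \<le> (spec_norm V M)^2"
    using sqrt_le_D by blast
  have "s^2 > 0" using s(1) by simp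
  then have "nr V (mv V M w) \<le> (spec_norm V M)^2 * s^2"
    using le by (simp only: pos_divide_le_eq)
  then show ?thesis by (simp only: s(2))
qed

lemma main_bound:
  fixes q :: "nat set \<Rightarrow> real" and V :: "nat set set" and \<delta> :: real
  assumes V: "finite V" and d: "\<delta> > 0"
    and P: "\<And>x. x \<in> V \<Longrightarrow> f x \<Longrightarrow> \<delta> \<le> q x"
    and N: "\<And>x. x \<in> V \<Longrightarrow> \<not> f x \<Longrightarrow> q x \<le> - \<delta>"
  shows "spec_norm V (sens_adj f) \<le> spec_norm V (B_mat q) / \<delta>"
proof -
  define K where "K = spec_norm V (B_mat q)"
  have K0: "K \<ge> 0" unfolding K_def by (rule sn_nonneg[OF V])
  have "Sup {sqrt (nr V (mv V (sens_adj f) v)) | v. nr V v \<le> 1} \<le> K / \<delta>"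
  proof (rule cSup_least)
    show "{sqrt (nr V (mv V (sens_adj f) v)) | v. nr V v \<le> 1} \<noteq> {}"
      by (rule ex_in_conv[THEN iffD1], rule exI[of _ "sqrt (nr V (mv V (sens_adj f) (\<lambda>_. 0)))"])
         (auto simp: nr_def)
  next
    fix r assume "r \<in> {sqrt (nr V (mv V (sens_adj f) v)) | v. nr V v \<le> 1}"
    then obtain v where r: "r = sqrt (nr V (mv V (sens_adj f) v))" and v: "nr V v \<le> 1" by auto
    define wN where "wN = (\<lambda>y. if f y then 0 else \<bar>v y\<bar>)"
    define wP where "wP = (\<lambda>y. if f y then \<bar>v y\<bar> else 0)"
    have pt: "\<delta>^2 * (mv V (sens_adj f) v x)^2 \<le> (mv V (B_mat q) wN x)^2 + (mv V (B_mat q) wP x)^2"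
      if x: "x \<in> V" for x
    proof -
      have abs1: "\<bar>mv V (sens_adj f) v x\<bar> \<le> (\<Sum>y\<in>V. sens_adj f x y * \<bar>v y\<bar>)"
      proof -
        have "\<bar>mv V (sens_adj f) v x\<bar> \<le> (\<Sum>y\<in>V. \<bar>sens_adj f x y * v y\<bar>)"
          unfolding mv_def by (rule sum_abs)
        also have "\<dots> = (\<Sum>y\<in>V. sens_adj f x y * \<bar>v y\<bar>)"
          by (rule sum.cong) (auto simp: sens_adj_def abs_mult)
        finally show ?thesis .
      qed
      show ?thesis
      proof (cases "f x")
        case True
        have "\<delta> * \<bar>mv V (sens_adj f) v x\<bar> \<le> \<delta> * (\<Sum>y\<in>V. sens_adj f x y * \<bar>v y\<bar>)"
          using abs1 d by (intro mult_left_mono) auto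
        also have "\<delta> * (\<Sum>y\<in>V. sens_adj f x y * \<bar>v y\<bar>) = (\<Sum>y\<in>V. \<delta> * sens_adj f x y * wN y)"
          by (auto simp: sum_distrib_left sens_adj_def wN_def True intro!: sum.cong)
        also have "\<dots> \<le> mv V (B_mat q) wN x" unfolding mv_def
        proof (rule sum_mono)
          fix y assume y: "y \<in> V"
          show "\<delta> * sens_adj f x y * wN y \<le> B_mat q x y * wN y"
          proof (cases "hamming x y = 1 \<and> \<not> f y")
            case True': True
            have dl: "\<delta> \<le> (q x - q y) / 2" using P[OF x \<open>f x\<close>] N[OF y] True' by simp
            show ?thesis using True' \<open>f x\<close> mult_right_mono[OF dl abs_ge_zero[of "v y"]]
              by (auto simp: sens_adj_def B_mat_def wN_def)
          next
            case False
            then show ?thesis by (auto simp: sens_adj_def B_mat_def wN_def)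
          qed
        qed
        finally have "\<delta> * \<bar>mv V (sens_adj f) v x\<bar> \<le> mv V (B_mat q) wN x" .
        then have "(\<delta> * \<bar>mv V (sens_adj f) v x\<bar>)^2 \<le> (mv V (B_mat q) wN x)^2"
          using d by (intro power_mono) auto
        moreover have "(\<delta> * \<bar>mv V (sens_adj f) v x\<bar>)^2 = \<delta>^2 * (mv V (sens_adj f) v x)^2"
          by (simp add: power_mult_distrib)
        moreover have "(mv V (B_mat q) wN x)^2 \<le> (mv V (B_mat q) wN x)^2 + (mv V (B_mat q) wP x)^2"
          by simp
        ultimately show ?thesis by linarith
      next
        case False
        have "\<delta> * \<bar>mv V (sens_adj f) v x\<bar> \<le> \<delta> * (\<Sum>y\<in>V. sens_adj f x y * \<bar>v y\<bar>)"
          using abs1 d by (intro mult_left_mono) auto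
        also have "\<delta> * (\<Sum>y\<in>V. sens_adj f x y * \<bar>v y\<bar>) = (\<Sum>y\<in>V. \<delta> * sens_adj f x y * wP y)"
          by (auto simp: sum_distrib_left sens_adj_def wP_def False intro!: sum.cong)
        also have "\<dots> \<le> - mv V (B_mat q) wP x" unfolding mv_def sum_negf[symmetric]
        proof (rule sum_mono)
          fix y assume y: "y \<in> V"
          show "\<delta> * sens_adj f x y * wP y \<le> - (B_mat q x y * wP y)"
          proof (cases "hamming x y = 1 \<and> f y")
            case True': True
            have dl: "\<delta> \<le> (q y - q x) / 2" using N[OF x \<open>\<not> f x\<close>] P[OF y] True' by simp
            have "\<delta> * sens_adj f x y * wP y = \<delta> * \<bar>v y\<bar>"
              using True' \<open>\<not> f x\<close> by (simp add: sens_adj_def wP_def)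
            also have "\<dots> \<le> (q y - q x) / 2 * \<bar>v y\<bar>"
              by (rule mult_right_mono[OF dl abs_ge_zero])
            also have "\<dots> = - (B_mat q x y * wP y)"
              using True' by (simp add: B_mat_def wP_def field_simps)
            finally show ?thesis .
          next
            case False
            then show ?thesis using \<open>\<not> f x\<close> by (auto simp: sens_adj_def B_mat_def wP_def)
          qed
        qed
        finally have "\<delta> * \<bar>mv V (sens_adj f) v x\<bar> \<le> - mv V (B_mat q) wP x" .
        then have "(\<delta> * \<bar>mv V (sens_adj f) v x\<bar>)^2 \<le> (- mv V (B_mat q) wP x)^2"
          using d by (intro power_mono) auto
        moreover have "(\<delta> * \<bar>mv V (sens_adj f) v x\<bar>)^2 = \<delta>^2 * (mv V (sens_adj f) v x)^2"
          by (simp add: power_mult_distrib)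
        moreover have "(- mv V (B_mat q) wP x)^2 \<le> (mv V (B_mat q) wN x)^2 + (mv V (B_mat q) wP x)^2"
          by simp
        ultimately show ?thesis by linarith
      qed
    qed
    have sumeq: "nr V wN + nr V wP = nr V v"
      unfolding nr_def sum.distrib[symmetric] by (rule sum.cong) (auto simp: wN_def wP_def)
    have "\<delta>^2 * nr V (mv V (sens_adj f) v) \<le> nr V (mv V (B_mat q) wN) + nr V (mv V (B_mat q) wP)"
      unfolding nr_def sum_distrib_left sum.distrib[symmetric] by (rule sum_mono) (rule pt)
    also have "\<dots> \<le> K^2 * nr V wN + K^2 * nr V wP"
      unfolding K_def by (intro add_mono sn_scale[OF V])
    also have "K^2 * nr V wN + K^2 * nr V wP = K^2 * nr V v"
      using sumeq by (metis distrib_left)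
    also have "\<dots> \<le> K^2" using v by (simp add: mult_left_le)
    finally have "\<delta>^2 * nr V (mv V (sens_adj f) v) \<le> K^2" .
    then have "nr V (mv V (sens_adj f) v) \<le> (K/\<delta>)^2" using d
      by (simp add: power_divide field_simps)
    then have "sqrt (nr V (mv V (sens_adj f) v)) \<le> sqrt ((K/\<delta>)^2)"
      by (rule real_sqrt_le_mono)
    also have "sqrt ((K/\<delta>)^2) = K/\<delta>" using K0 d by simp
    finally show "r \<le> K / \<delta>" using r by simp
  qed
  then show ?thesis unfolding spec_norm_alt K_def .
qed

theorem lemma4p13:
  fixes n :: nat and f :: "nat set \<Rightarrow> bool" and \<epsilon> :: real
    and c :: "(nat \<Rightarrow> nat) \<Rightarrow> real"
  assumes "0 \<le> \<epsilon>" and "\<epsilon> < 1/2"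
    and "finite {\<alpha>. c \<alpha> \<noteq> 0}"
    and "\<And>x. x \<in> cube n \<Longrightarrow> f x \<Longrightarrow>
           1 - 2*\<epsilon> \<le> poly_eval n c x \<and> poly_eval n c x \<le> 1"
    and "\<And>x. x \<in> cube n \<Longrightarrow> \<not> f x \<Longrightarrow>
           -1 \<le> poly_eval n c x \<and> poly_eval n c x \<le> -1 + 2*\<epsilon>"
  shows "lambda_sens n f \<le> (1 / (1 - 2*\<epsilon>)) * spec_norm (cube n) (B_mat (poly_eval n c))"
proof -
  have fin: "finite (cube n)" unfolding cube_def by simp
  have "spec_norm (cube n) (sens_adj f) \<le> spec_norm (cube n) (B_mat (poly_eval n c)) / (1 - 2*\<epsilon>)"
  proof (rule main_bound[OF fin])
    show "0 < 1 - 2*\<epsilon>" using assms(2) by simp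
  next
    fix x assume "x \<in> cube n" "f x"
    then show "1 - 2*\<epsilon> \<le> poly_eval n c x" using assms(4) by blast
  next
    fix x assume "x \<in> cube n" "\<not> f x"
    then have "poly_eval n c x \<le> -1 + 2*\<epsilon>" using assms(5) by blast
    then show "poly_eval n c x \<le> - (1 - 2*\<epsilon>)" by simp
  qed
  then show ?thesis unfolding lambda_sens_def by simp
qed

end
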